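(* Let $0<p<1/2$, $c>0$, $k=c\log_2 n$ (an integer $\ge2$), $s\in\{0,1\}^n$, $x\in\{0,1\}^k$, $i\in\{1,\dots,n-k+1\}$. Given $T$ independent traces $\tilde S_1,\dots,\tilde S_T$ of $s$, let $\hat P_{s,y}[i]=\frac1T\sum_{t=1}^T\mathbb 1\{\tilde S_t[i:i+|y|-1]=y\}$ for any binary string $y$, and $$\hat K_{s,x}[i]=\frac{1}{(1-p)^k}\left(\hat P_{s,x}[i]-\sum_{\ell=k+1}^{n}\sum_{y\in Y_\ell(x)}(-1)^{|y|-|x|+1}\hat P_{s,y}[i]\binom{y}{x}'\left(\frac{p}{1-p}\right)^{\ell-k}\right).$$ Then for every $\epsilon>0$, $$\Pr\left(|\hat K_{s,x}[i]-K_{s,x}[i]|\ge\epsilon\right)\le 2\exp\!\left(-\frac{2T\epsilon^2}{n\left(n^{-c\log_2(1-p)}\left(1+2n^{\alpha_c(p)}\right)\right)^2}\right).$$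
   Context: Deletion channel: a trace of $s$ is obtained by deleting each bit of $s$ independently with probability $p$; traces are independent. Strings are indexed from 1, $s[a:b]=(s[a],\dots,s[b])$; the indicator $\mathbb 1\{\tilde S_t[i:i+m-1]=y\}$ is $0$ if the trace is too short. For a string $z$, $z[2:-2]$ is $z$ with first and last symbols removed. $\binom{y}{z}$ is the number of ways to delete $|y|-|z|$ symbols of $y$ to obtain $z$, and $\binom{y}{z}'=\binom{y[2:-2]}{z[2:-2]}$. $Y_\ell(x)$ is the set of binary strings $y$ of length $\ell$ that are supersequences of $x$ with the same first bit and same last bit as $x$. $K_{s,x}[i]=\sum_{j=1}^{n-k+1}\binom{j-1}{i-1}(1-p)^{i-1}p^{j-i}\mathbb 1\{s[j:j+k-1]=x\}$. $H$ is the binary entropy (base 2) and $\alpha_c(p)=1+c\log_2\frac{1-p}{p}+\frac{cH(1-\frac{p}{1-p})+c\log_2\frac{p}{1-p}}{1-\frac{p}{1-p}}$. *)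

theory Defs
  imports "HOL-Probability.Probability" "HOL-Library.Sublist"
begin

text \<open>Binary strings are bool lists, indexed from 1 in the paper.\<close>

primrec trace_pmf :: "real \<Rightarrow> bool list \<Rightarrow> bool list pmf" where
  "trace_pmf p [] = return_pmf []"
| "trace_pmf p (b # s) =
     bind_pmf (bernoulli_pmf (1 - p))
       (\<lambda>keep. map_pmf (\<lambda>t. if keep then b # t else t) (trace_pmf p s))"

definition traces_pmf :: "real \<Rightarrow> bool list \<Rightarrow> nat \<Rightarrow> bool list list pmf" where
  "traces_pmf p s T = replicate_pmf T (trace_pmf p s)"

text \<open>Indicator 1{w[i:i+|y|-1] = y} (1-indexed; 0 if w too short).\<close>
definition win_ind :: "bool list \<Rightarrow> nat \<Rightarrow> bool list \<Rightarrow> real" where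
  "win_ind w i y = (if i + length y - 1 \<le> length w \<and> take (length y) (drop (i - 1) w) = y
                    then 1 else 0)"

definition P_hat :: "bool list list \<Rightarrow> bool list \<Rightarrow> nat \<Rightarrow> real" where
  "P_hat ts y i = (1 / real (length ts)) * (\<Sum>t<length ts. win_ind (ts ! t) i y)"

definition binom_str :: "bool list \<Rightarrow> bool list \<Rightarrow> nat" where
  "binom_str y z = card {S. S \<subseteq> {..<length y} \<and> card S = length z \<and> nths y S = z}"

definition inner :: "bool list \<Rightarrow> bool list" where
  "inner z = butlast (tl z)"

definition binom_str' :: "bool list \<Rightarrow> bool list \<Rightarrow> nat" where
  "binom_str' y z = binom_str (inner y) (inner z)"

definition Yset :: "nat \<Rightarrow> bool list \<Rightarrow> bool list set" where
  "Yset l x = {y. length y = l \<and> subseq x y \<and> hd y = hd x \<and> last y = last x}"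

definition K_hat :: "real \<Rightarrow> nat \<Rightarrow> bool list list \<Rightarrow> bool list \<Rightarrow> nat \<Rightarrow> real" where
  "K_hat p n ts x i =
     (1 / (1 - p) ^ length x) *
     (P_hat ts x i -
      (\<Sum>l = length x + 1..n. \<Sum>y\<in>Yset l x.
          (-1) ^ (length y - length x + 1) * P_hat ts y i * real (binom_str' y x)
          * (p / (1 - p)) ^ (l - length x)))"

definition K_true :: "real \<Rightarrow> bool list \<Rightarrow> bool list \<Rightarrow> nat \<Rightarrow> real" where
  "K_true p s x i =
     (\<Sum>j = 1..length s - length x + 1.
        real ((j - 1) choose (i - 1)) * (1 - p) ^ (i - 1) * p ^ (j - i)
        * (if take (length x) (drop (j - 1) s) = x then 1 else 0))"

definition H2 :: "real \<Rightarrow> real" where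
  "H2 q = - q * log 2 q - (1 - q) * log 2 (1 - q)"

definition alpha_c :: "real \<Rightarrow> real \<Rightarrow> real" where
  "alpha_c c p = 1 + c * log 2 ((1 - p) / p)
     + (c * H2 (1 - p / (1 - p)) + c * log 2 (p / (1 - p))) / (1 - p / (1 - p))"

end

theory Submission
  imports Defs
begin

fun bn :: "bool list \<Rightarrow> bool list \<Rightarrow> nat" where
  "bn v [] = 1"
| "bn [] (a#u) = 0"
| "bn (a#v) (b#u) = bn v (b#u) + (if a = b then bn v u else 0)"

lemma bn_short: "length v < length u \<Longrightarrow> bn v u = 0"
  by (induction v u rule: bn.induct) auto

lemma bn_same_len: "length v = length u \<Longrightarrow> bn v u = (if v = u then 1 else 0)"
proof (induction v u rule: bn.induct)
  case (3 a v b u)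
  then show ?case by (auto simp: bn_short)
qed auto

lemma bn_subseq: "bn v u \<noteq> 0 \<Longrightarrow> subseq u v"
  by (induction v u rule: bn.induct) (auto split: if_splits dest: subseq_Cons')

lemma bn_le_choose: "bn v u \<le> length v choose length u"
proof (induction v u rule: bn.induct)
  case (3 a v b u)
  then show ?case by auto
qed auto

lemma bn_Cons_left: "bn (a#v) u = bn v u + (case u of [] \<Rightarrow> 0 | b#u' \<Rightarrow> if a = b then bn v u' else 0)"
  by (cases u) auto

definition Sets :: "bool list \<Rightarrow> bool list \<Rightarrow> nat set set" where
  "Sets y z = {S. S \<subseteq> {..<length y} \<and> card S = length z \<and> nths y S = z}"

lemma Sets_alt: "Sets y z = {S. S \<subseteq> {..<length y} \<and> nths y S = z}"
proof -
  have "card S = length (nths y S)" if "S \<subseteq> {..<length y}" for S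
  proof -
    have "{i. i < length y \<and> i \<in> S} = S" using that by auto
    thus ?thesis by (simp add: length_nths)
  qed
  thus ?thesis unfolding Sets_def by auto
qed

lemma Sets_Nil: "Sets [] z = (if z = [] then {{}} else {})"
  unfolding Sets_alt by auto

lemma nths_Suc_image: "{j. Suc j \<in> Suc ` S} = S" by auto

lemma Sets_Cons:
  "Sets (a#y) z = (\<lambda>S. Suc ` S) ` Sets y z \<union>
     (case z of [] \<Rightarrow> {} | b#z' \<Rightarrow> if a = b then (\<lambda>S. insert 0 (Suc ` S)) ` Sets y z' else {})"
  (is "?L = ?A \<union> ?B")
proof (rule set_eqI)
  fix S
  show "S \<in> ?L \<longleftrightarrow> S \<in> ?A \<union> ?B"
  proof (cases "0 \<in> S")
    case True
    define S' where "S' = {j. Suc j \<in> S}"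
    have SS: "S = insert 0 (Suc ` S')"
    proof (rule set_eqI)
      fix x show "x \<in> S \<longleftrightarrow> x \<in> insert 0 (Suc ` S')"
        by (cases x) (auto simp: S'_def True)
    qed
    have notA: "S \<notin> ?A" using True by auto
    have n1: "nths (a#y) S = a # nths y S'" by (simp add: nths_Cons True S'_def)
    have s1: "S \<subseteq> {..<Suc (length y)} \<longleftrightarrow> S' \<subseteq> {..<length y}" unfolding SS by auto
    have "S \<in> ?L \<longleftrightarrow> S' \<subseteq> {..<length y} \<and> z = a # nths y S'"
      unfolding Sets_alt by (simp add: n1 s1 eq_commute)
    also have "\<dots> \<longleftrightarrow> S \<in> ?B"
    proof
      assume h: "S' \<subseteq> {..<length y} \<and> z = a # nths y S'"
      thus "S \<in> ?B" using SS by (auto simp: Sets_alt)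
    next
      assume "S \<in> ?B"
      then obtain b z' T where z: "z = b#z'" "a = b" "T \<in> Sets y z'" "S = insert 0 (Suc ` T)"
        by (auto split: list.splits if_splits)
      have "T = S'" using z(4) unfolding S'_def by auto
      thus "S' \<subseteq> {..<length y} \<and> z = a # nths y S'" using z by (auto simp: Sets_alt)
    qed
    finally show ?thesis using notA by blast
  next
    case False
    define S' where "S' = {j. Suc j \<in> S}"
    have SS: "S = Suc ` S'"
    proof (rule set_eqI)
      fix x show "x \<in> S \<longleftrightarrow> x \<in> Suc ` S'"
        using False by (cases x) (auto simp: S'_def)
    qed
    have notB: "S \<notin> ?B" using False by (auto split: list.splits)
    have n2: "nths (a#y) S = nths y S'" by (simp add: nths_Cons False S'_def)
    have s2: "S \<subseteq> {..<Suc (length y)} \<longleftrightarrow> S' \<subseteq> {..<length y}" unfolding SS by auto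
    have inj1: "inj (\<lambda>S::nat set. Suc ` S)" by (auto simp: inj_def inj_image_eq_iff[OF inj_Suc])
    have "S \<in> ?L \<longleftrightarrow> S' \<subseteq> {..<length y} \<and> z = nths y S'"
      unfolding Sets_alt by (simp add: n2 s2 eq_commute)
    also have "\<dots> \<longleftrightarrow> S \<in> ?A"
      unfolding SS by (simp add: inj_image_mem_iff[OF inj1] Sets_alt eq_commute)
    finally show ?thesis using notB by blast
  qed
qed

lemma finite_Sets: "finite (Sets y z)"
  unfolding Sets_alt by (rule finite_subset[of _ "Pow {..<length y}"]) auto

lemma Sets_Nil_right: "Sets y [] = {{}}"
proof -
  have "S \<subseteq> {..<length y} \<Longrightarrow> card S = 0 \<Longrightarrow> S = {}" for S
    using finite_subset[of S "{..<length y}"] by auto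
  thus ?thesis by (auto simp: Sets_def)
qed

lemma binom_str_bn: "binom_str y z = bn y z"
proof (induction y arbitrary: z)
  case Nil
  have e: "{S::nat set. S = {} \<and> card S = 0} = {{}}" by auto
  show ?case by (cases z) (auto simp: binom_str_def Sets_def[symmetric] Sets_Nil e)
next
  case (Cons a y)
  have cardA: "card ((\<lambda>S. Suc ` S) ` Sets y z) = bn y z" for z
  proof -
    have inj1: "inj (\<lambda>S::nat set. Suc ` S)" by (auto simp: inj_def inj_image_eq_iff[OF inj_Suc])
    show ?thesis using Cons card_image[OF inj_on_subset[OF inj1]]
      by (simp add: binom_str_def Sets_def[symmetric])
  qed
  have inv: "{j. Suc j \<in> insert 0 (Suc ` S)} = S" for S by auto
  have inj2: "inj (\<lambda>S. insert 0 (Suc ` S))"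
    by (rule injI) (metis inv)
  have bs: "binom_str (a#y) z = card (Sets (a#y) z)" by (simp add: binom_str_def Sets_def)
  show ?case
  proof (cases z)
    case Nil
    then show ?thesis using Sets_Nil_right[of "a#y"] unfolding binom_str_def Sets_def by simp
  next
    case (Cons b z')
    have disj: "(\<lambda>S. Suc ` S) ` Sets y z \<inter> (\<lambda>S. insert 0 (Suc ` S)) ` Sets y z' = {}" by auto
    have cB: "card ((\<lambda>S. insert 0 (Suc ` S)) ` Sets y z') = bn y z'"
      using Cons.IH[of z'] card_image[OF inj_on_subset[OF inj2]]
      by (simp add: binom_str_def Sets_def[symmetric])
    show ?thesis
    proof (cases "a = b")
      case True
      have "card (Sets (a#y) z) = card ((\<lambda>S. Suc ` S) ` Sets y z) + card ((\<lambda>S. insert 0 (Suc ` S)) ` Sets y z')"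
        unfolding Sets_Cons using Cons True disj by (simp add: card_Un_disjoint finite_Sets)
      then show ?thesis unfolding bs using cardA cB Cons True by simp
    next
      case False
      have "card (Sets (a#y) z) = card ((\<lambda>S. Suc ` S) ` Sets y z)"
        unfolding Sets_Cons using Cons False by simp
      then show ?thesis unfolding bs using cardA Cons False by simp
    qed
  qed
qed

definition Ew :: "real \<Rightarrow> bool list \<Rightarrow> nat \<Rightarrow> bool list \<Rightarrow> real" where
  "Ew p s i y = measure_pmf.expectation (trace_pmf p s) (\<lambda>t. win_ind t i y)"

lemma set_trace_len: "set_pmf (trace_pmf p s) \<subseteq> {t. length t \<le> length s}"
  by (induction s) (auto simp: set_bind_pmf)

lemma finite_trace: "finite (set_pmf (trace_pmf p s))"
proof (rule finite_subset[OF set_trace_len])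
  have "{t::bool list. length t \<le> length s} = {t. set t \<subseteq> UNIV \<and> length t \<le> length s}" by auto
  thus "finite {t::bool list. length t \<le> length s}" using finite_lists_length_le[of "UNIV::bool set"] by simp
qed

lemma exp_trace_Cons:
  fixes f :: "bool list \<Rightarrow> real"
  assumes "0 \<le> p" "p \<le> 1"
  shows "measure_pmf.expectation (trace_pmf p (b#s)) f =
     (1-p) * measure_pmf.expectation (trace_pmf p s) (\<lambda>t. f (b#t))
     + p * measure_pmf.expectation (trace_pmf p s) f"
proof -
  have "measure_pmf.expectation (trace_pmf p (b#s)) f =
    (\<Sum>a\<in>UNIV. pmf (bernoulli_pmf (1-p)) a *\<^sub>R
        measure_pmf.expectation (map_pmf (\<lambda>t. if a then b # t else t) (trace_pmf p s)) f)"
    unfolding trace_pmf.simps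
    by (rule pmf_expectation_bind) (auto simp: finite_trace)
  thus ?thesis using assms by (simp add: UNIV_bool)
qed

lemma win_Nil: "y \<noteq> [] \<Longrightarrow> win_ind [] i y = 0"
  by (simp add: win_ind_def)

lemma win_empty: "win_ind t (Suc 0) [] = 1"
  by (simp add: win_ind_def)

lemma win_Cons_Suc: "win_ind (b#t) (Suc (Suc i)) y = win_ind t (Suc i) y"
  by (simp add: win_ind_def)

lemma win_Cons_1: "win_ind (b#t) (Suc 0) (a#y) = (if a = b then win_ind t (Suc 0) y else 0)"
  by (auto simp add: win_ind_def)

lemma Ew_Nil: "y \<noteq> [] \<Longrightarrow> Ew p [] i y = 0"
  by (simp add: Ew_def win_Nil)

lemma Ew_empty: "Ew p s (Suc 0) [] = 1"
  by (simp add: Ew_def win_empty)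

lemma Ew_Cons_Suc: "0 \<le> p \<Longrightarrow> p \<le> 1 \<Longrightarrow>
   Ew p (b#s) (Suc (Suc i)) y = (1-p) * Ew p s (Suc i) y + p * Ew p s (Suc (Suc i)) y"
  by (simp add: Ew_def exp_trace_Cons win_Cons_Suc del: trace_pmf.simps)

lemma Ew_Cons_1: "0 \<le> p \<Longrightarrow> p \<le> 1 \<Longrightarrow>
   Ew p (b#s) (Suc 0) (a#y) = (1-p) * (if a = b then Ew p s (Suc 0) y else 0) + p * Ew p s (Suc 0) (a#y)"
  by (simp add: Ew_def exp_trace_Cons win_Cons_1 del: trace_pmf.simps)

lemma Ew_long: "length s < length y \<Longrightarrow> Ew p s i y = 0"
proof -
  assume h: "length s < length y"
  have "\<And>t. t \<in> set_pmf (trace_pmf p s) \<Longrightarrow> win_ind t i y = 0"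
  proof -
    fix t assume "t \<in> set_pmf (trace_pmf p s)"
    hence "length t \<le> length s" using set_trace_len by blast
    hence "take (length y) (drop (i - 1) t) \<noteq> y" using h
      by (metis length_drop length_take min.absorb4 diff_le_self le_trans linorder_not_le order.strict_iff_not min_def)
    thus "win_ind t i y = 0" by (simp add: win_ind_def)
  qed
  thus ?thesis unfolding Ew_def by (subst integral_measure_pmf_real[where A="{}"]) auto
qed

definition Lv :: "nat \<Rightarrow> bool list set" where "Lv m = {v. length v = m}"

lemma finite_Lv: "finite (Lv m)"
proof -
  have "Lv m \<subseteq> {t. set t \<subseteq> UNIV \<and> length t \<le> m}" by (auto simp: Lv_def)
  thus ?thesis using finite_lists_length_le[of "UNIV::bool set"] finite_subset by auto
qed

lemma Lv_0: "Lv 0 = {[]}" by (auto simp: Lv_def)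

lemma sum_Lv_Suc:
  fixes f :: "bool list \<Rightarrow> 'a::comm_monoid_add"
  shows "(\<Sum>v\<in>Lv (Suc m). f v) = (\<Sum>v\<in>Lv m. f (True#v)) + (\<Sum>v\<in>Lv m. f (False#v))"
proof -
  have e: "Lv (Suc m) = (Cons True) ` Lv m \<union> (Cons False) ` Lv m"
    by (auto simp: Lv_def length_Suc_conv image_iff)
  have "(\<Sum>v\<in>Lv (Suc m). f v) = (\<Sum>v\<in>(Cons True) ` Lv m. f v) + (\<Sum>v\<in>(Cons False) ` Lv m. f v)"
    unfolding e by (rule sum.union_disjoint) (auto simp: finite_Lv)
  also have "\<dots> = (\<Sum>v\<in>Lv m. f (True#v)) + (\<Sum>v\<in>Lv m. f (False#v))"
    by (simp add: sum.reindex)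
  finally show ?thesis .
qed

lemma sum_Lv_Suc_sel:
  fixes f :: "bool \<Rightarrow> bool list \<Rightarrow> real"
  shows "(\<Sum>v\<in>Lv (Suc m). (if hd v = b then f b (tl v) else 0)) = (\<Sum>v\<in>Lv m. f b v)"
  by (cases b) (simp_all add: sum_Lv_Suc)

definition LS :: "real \<Rightarrow> bool \<Rightarrow> nat \<Rightarrow> bool list \<Rightarrow> bool list \<Rightarrow> real" where
  "LS p c N s u = (\<Sum>m<N. \<Sum>v\<in>Lv m. (-(p/(1-p)))^(m - length u) * real (bn v u) * Ew p s (Suc 0) (v@[c]))"

lemma LS_Nil: "LS p c N [] u = 0"
  by (simp add: LS_def Ew_Nil)

lemma bn_Nil_left: "bn [] u = (if u = [] then 1 else 0)"
  by (cases u) auto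

lemma pow_shift:
  fixes q :: real
  assumes "length v = m"
  shows "q^(Suc m - length u) * real (bn v u) = q * (q^(m - length u) * real (bn v u))"
proof (cases "bn v u = 0")
  case False
  hence "length u \<le> m" using bn_short assms by (metis not_le)
  then have "Suc m - length u = Suc (m - length u)" by simp
  then show ?thesis by simp
qed simp

definition Xf :: "real \<Rightarrow> bool \<Rightarrow> bool \<Rightarrow> bool list \<Rightarrow> bool list \<Rightarrow> real" where
  "Xf p c b s v = (case v of [] \<Rightarrow> (if c = b then 1 else 0) | a#v' \<Rightarrow> (if a = b then Ew p s (Suc 0) (v'@[c]) else 0))"

lemma Ew_Cons_app: "0 \<le> p \<Longrightarrow> p \<le> 1 \<Longrightarrow>
  Ew p (b#s) (Suc 0) (v@[c]) = (1-p) * Xf p c b s v + p * Ew p s (Suc 0) (v@[c])"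
  by (cases v) (simp_all add: Xf_def Ew_Cons_1 Ew_empty)

lemma LS_Cons:
  assumes "0 < p" "p < 1"
  shows "LS p c (Suc N) (b#s) u =
    (1-p) * ((if u = [] \<and> c = b then 1 else 0) - (p/(1-p)) * LS p c N s u
       + (case u of [] \<Rightarrow> 0 | a#u' \<Rightarrow> if a = b then LS p c N s u' else 0))
    + p * LS p c (Suc N) s u"
proof -
  define q where "q = -(p/(1-p))"
  define XS where "XS = (\<Sum>m<Suc N. \<Sum>v\<in>Lv m. q^(m - length u) * real (bn v u) * Xf p c b s v)"
  have "LS p c (Suc N) (b#s) u = (\<Sum>m<Suc N. \<Sum>v\<in>Lv m. (1-p) * (q^(m - length u) * real (bn v u) * Xf p c b s v)
      + p * (q^(m - length u) * real (bn v u) * Ew p s (Suc 0) (v@[c])))"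
    unfolding LS_def q_def using assms
    by (intro sum.cong refl) (simp add: Ew_Cons_app algebra_simps)
  also have "\<dots> = (1-p) * XS + p * LS p c (Suc N) s u"
    unfolding XS_def LS_def q_def by (simp add: sum.distrib sum_distrib_left del: sum.lessThan_Suc)
  finally have s1: "LS p c (Suc N) (b#s) u = (1-p) * XS + p * LS p c (Suc N) s u" .
  have t0: "(\<Sum>v\<in>Lv 0. q^(0 - length u) * real (bn v u) * Xf p c b s v) = (if u = [] \<and> c = b then 1 else 0)"
    by (simp add: Lv_0 bn_Nil_left Xf_def)
  have tS: "(\<Sum>v\<in>Lv (Suc m). q^(Suc m - length u) * real (bn v u) * Xf p c b s v)
      = q * (\<Sum>v\<in>Lv m. q^(m - length u) * real (bn v u) * Ew p s (Suc 0) (v@[c]))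
        + (case u of [] \<Rightarrow> 0 | a#u' \<Rightarrow> if a = b then
             (\<Sum>v\<in>Lv m. q^(m - length u') * real (bn v u') * Ew p s (Suc 0) (v@[c])) else 0)" for m
  proof -
    have "(\<Sum>v\<in>Lv (Suc m). q^(Suc m - length u) * real (bn v u) * Xf p c b s v)
        = (\<Sum>v\<in>Lv m. q^(Suc m - length u) * real (bn (b#v) u) * Ew p s (Suc 0) (v@[c]))"
      by (cases b) (simp_all add: sum_Lv_Suc Xf_def)
    also have "\<dots> = (\<Sum>v\<in>Lv m. q * (q^(m - length u) * real (bn v u) * Ew p s (Suc 0) (v@[c]))
        + q^(Suc m - length u) * real (case u of [] \<Rightarrow> 0 | a#u' \<Rightarrow> if b = a then bn v u' else 0) * Ew p s (Suc 0) (v@[c]))"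
    proof (rule sum.cong[OF refl])
      fix v assume "v \<in> Lv m"
      hence lv: "length v = m" by (simp add: Lv_def)
      show "q^(Suc m - length u) * real (bn (b#v) u) * Ew p s (Suc 0) (v@[c]) =
        q * (q^(m - length u) * real (bn v u) * Ew p s (Suc 0) (v@[c]))
        + q^(Suc m - length u) * real (case u of [] \<Rightarrow> 0 | a#u' \<Rightarrow> if b = a then bn v u' else 0) * Ew p s (Suc 0) (v@[c])"
      proof -
        have ps: "q^(Suc m - length u) * real (bn v u) * Ew p s (Suc 0) (v@[c]) = q * (q^(m - length u) * real (bn v u) * Ew p s (Suc 0) (v@[c]))"
          by (simp only: pow_shift[OF lv, of q u] mult.assoc)
        show ?thesis unfolding bn_Cons_left of_nat_add distrib_left distrib_right ps ..
      qed
    qed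
    also have "\<dots> = q * (\<Sum>v\<in>Lv m. q^(m - length u) * real (bn v u) * Ew p s (Suc 0) (v@[c]))
        + (case u of [] \<Rightarrow> 0 | a#u' \<Rightarrow> if a = b then
             (\<Sum>v\<in>Lv m. q^(m - length u') * real (bn v u') * Ew p s (Suc 0) (v@[c])) else 0)"
      by (cases u) (auto simp: sum.distrib sum_distrib_left)
    finally show ?thesis .
  qed
  have "XS = (if u = [] \<and> c = b then 1 else 0) + q * LS p c N s u
      + (case u of [] \<Rightarrow> 0 | a#u' \<Rightarrow> if a = b then LS p c N s u' else 0)"
    unfolding XS_def sum.lessThan_Suc_shift t0 tS LS_def q_def[symmetric]
    by (cases u) (auto simp: sum.distrib sum_distrib_left)
  with s1 show ?thesis by (simp add: q_def)
qed

lemma claim: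
  assumes "0 < p" "p < 1"
  shows "length s \<le> N \<Longrightarrow> LS p c N s u =
     (1-p)^(Suc (length u)) * (if take (Suc (length u)) s = u@[c] then 1 else 0)"
proof (induction s arbitrary: N u)
  case Nil
  then show ?case by (simp add: LS_Nil)
next
  case (Cons b s)
  then obtain N' where N: "N = Suc N'" "length s \<le> N'" by (cases N) auto
  have IH1: "LS p c (Suc N') s u = (1-p)^(Suc (length u)) * (if take (Suc (length u)) s = u@[c] then 1 else 0)"
    using Cons N by simp
  have IH2: "LS p c N' s w = (1-p)^(Suc (length w)) * (if take (Suc (length w)) s = w@[c] then 1 else 0)" for w
    using Cons N by simp
  have pp: "(1-p) * (p/(1-p)) = p" using assms by simp
  have np: "1 - p \<noteq> 0" using assms by simp
  show ?case
  proof (cases u)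
    case Nil
    then show ?thesis using assms unfolding N(1) LS_Cons[OF assms] IH1 IH2
      by (auto simp: field_simps np)
  next
    case (Cons a u')
    then show ?thesis using assms unfolding N(1) LS_Cons[OF assms] IH1 IH2
      by (auto simp: field_simps np)
  qed
qed

fun Kr :: "real \<Rightarrow> bool list \<Rightarrow> bool list \<Rightarrow> nat \<Rightarrow> real" where
  "Kr p x [] i = 0"
| "Kr p x (b#s) i = (if i \<le> 1 then (if take (length x) (b#s) = x then 1 else 0) else (1-p) * Kr p x s (i-1)) + p * Kr p x s i"

definition Ks :: "real \<Rightarrow> bool list \<Rightarrow> bool list \<Rightarrow> nat \<Rightarrow> real" where
  "Ks p x s i = (\<Sum>j<length s. real (j choose (i-1)) * (1-p)^(i-1) * p^(j+1-i)
       * (if take (length x) (drop j s) = x then 1 else 0))"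

lemma Ks_Nil: "Ks p x [] i = 0" by (simp add: Ks_def)

lemma Ks_Cons_1: "Ks p x (b#s) (Suc 0) = (if take (length x) (b#s) = x then 1 else 0) + p * Ks p x s (Suc 0)"
  unfolding Ks_def length_Cons sum.lessThan_Suc_shift by (simp add: sum_distrib_left algebra_simps)

lemma aux:
  fixes A B X Y P1 P2 I p :: real
  assumes "X = (1-p)*Y" "p*(B*P2) = B*P1"
  shows "(A + B) * X * P1 * I = (1-p) * (A * Y * P1 * I) + p * (B * X * P2 * I)"
proof -
  have h: "p * (B * X * P2 * I) = (p*(B*P2)) * (X * I)" by (simp only: mult_ac)
  show ?thesis unfolding h unfolding assms(2) by (simp add: assms(1) algebra_simps)
qed

lemma Ks_Cons_SS: "Ks p x (b#s) (Suc (Suc i)) = (1-p) * Ks p x s (Suc i) + p * Ks p x s (Suc (Suc i))"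
proof -
  have "Ks p x (b#s) (Suc (Suc i)) = (\<Sum>j<length s. real (Suc j choose Suc i) * (1-p)^(Suc i) * p^(j - i)
       * (if take (length x) (drop j s) = x then 1 else 0))"
    unfolding Ks_def length_Cons sum.lessThan_Suc_shift by simp
  also have "\<dots> = (\<Sum>j<length s. (1-p) * (real (j choose i) * (1-p)^i * p^(j - i)
       * (if take (length x) (drop j s) = x then 1 else 0)) + p * (real (j choose Suc i) * (1-p)^(Suc i) * p^(j - Suc i)
       * (if take (length x) (drop j s) = x then 1 else 0)))"
  proof (rule sum.cong[OF refl])
    fix j
    have e: "p * (real (j choose Suc i) * p^(j - Suc i)) = real (j choose Suc i) * p^(j - i)"
    proof (cases "j < Suc i")
      case True then show ?thesis by simp
    next
      case False
      then have "j - i = Suc (j - Suc i)" by simp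
      then show ?thesis by simp
    qed
    show "real (Suc j choose Suc i) * (1-p)^(Suc i) * p^(j - i) * (if take (length x) (drop j s) = x then 1 else 0) =
      (1-p) * (real (j choose i) * (1-p)^i * p^(j - i) * (if take (length x) (drop j s) = x then 1 else 0))
      + p * (real (j choose Suc i) * (1-p)^(Suc i) * p^(j - Suc i) * (if take (length x) (drop j s) = x then 1 else 0))"
      unfolding binomial_Suc_Suc of_nat_add by (rule aux) (simp_all add: e)
  qed
  also have "\<dots> = (1-p) * Ks p x s (Suc i) + p * Ks p x s (Suc (Suc i))"
    unfolding Ks_def by (simp add: sum.distrib sum_distrib_left)
  finally show ?thesis .
qed

lemma Kr_Ks: "1 \<le> i \<Longrightarrow> Kr p x s i = Ks p x s i"
proof (induction s arbitrary: i)
  case Nil then show ?case by (simp add: Ks_Nil)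
next
  case (Cons b s)
  show ?case
  proof (cases i)
    case 0 then show ?thesis using Cons by simp
  next
    case (Suc i')
    show ?thesis
    proof (cases i')
      case 0 then show ?thesis using Cons Suc by (simp add: Ks_Cons_1)
    next
      case (Suc i'')
      then show ?thesis using Cons \<open>i = Suc i'\<close> by (simp add: Ks_Cons_SS)
    qed
  qed
qed

lemma K_true_Ks:
  assumes "1 \<le> length x"
  shows "K_true p s x i = Ks p x s i"
proof -
  let ?f = "\<lambda>j. real (j choose (i-1)) * (1-p)^(i-1) * p^(j+1-i) * (if take (length x) (drop j s) = x then 1 else 0)"
  have "K_true p s x i = (\<Sum>j\<in>Suc ` {..<length s - length x + 1}. real ((j - 1) choose (i - 1)) * (1 - p) ^ (i - 1) * p ^ (j - i)
        * (if take (length x) (drop (j - 1) s) = x then 1 else 0))"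
    unfolding K_true_def image_Suc_lessThan ..
  also have "\<dots> = (\<Sum>j<length s - length x + 1. ?f j)"
    by (simp add: sum.reindex)
  also have "\<dots> = (\<Sum>j<length s. ?f j)"
  proof (cases "length x \<le> length s")
    case True
    show ?thesis
    proof (rule sum.mono_neutral_left)
      show "\<forall>j\<in>{..<length s} - {..<length s - length x + 1}. ?f j = 0"
      proof
        fix j assume "j \<in> {..<length s} - {..<length s - length x + 1}"
        hence "length (take (length x) (drop j s)) < length x" by auto
        thus "?f j = 0" by auto
      qed
    qed (use True assms in auto)
  next
    case False
    have z: "?f j = 0" for j
    proof -
      have "length (take (length x) (drop j s)) < length x" using False by auto
      thus ?thesis by auto
    qed
    have z1: "(\<Sum>j<length s - length x + 1. ?f j) = 0" by (rule sum.neutral) (use z in blast)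
    have z2: "(\<Sum>j<length s. ?f j) = 0" by (rule sum.neutral) (use z in blast)
    show ?thesis unfolding z1 z2 ..
  qed
  finally show ?thesis unfolding Ks_def .
qed

definition Phi :: "real \<Rightarrow> bool \<Rightarrow> bool \<Rightarrow> bool list \<Rightarrow> nat \<Rightarrow> bool list \<Rightarrow> nat \<Rightarrow> real" where
  "Phi p b c u N s i = (\<Sum>m<N. \<Sum>v\<in>Lv m. (-(p/(1-p)))^(m - length u) * real (bn v u) * Ew p s i (b#v@[c]))"

lemma claim2:
  assumes "0 < p" "p < 1"
  shows "length s \<le> N \<Longrightarrow> 1 \<le> i \<Longrightarrow> Phi p b c u N s i = (1-p)^(Suc (Suc (length u))) * Kr p (b#u@[c]) s i"
proof (induction s arbitrary: i)
  case Nil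
  then show ?case by (simp add: Phi_def Ew_Nil)
next
  case (Cons b' s)
  have len: "length s \<le> N" using Cons by simp
  show ?case
  proof (cases i)
    case 0 then show ?thesis using Cons by simp
  next
    case (Suc i')
    show ?thesis
    proof (cases i')
      case 0
      have e1: "(-(p/(1-p)))^(m - length u) * real (bn v u) * Ew p (b'#s) (Suc 0) (b#v@[c]) =
        (1-p) * (if b = b' then (-(p/(1-p)))^(m - length u) * real (bn v u) * Ew p s (Suc 0) (v@[c]) else 0)
        + p * ((-(p/(1-p)))^(m - length u) * real (bn v u) * Ew p s (Suc 0) (b#v@[c]))" for m v
        using assms by (simp add: Ew_Cons_1 algebra_simps)
      have "Phi p b c u N (b'#s) i = (1-p) * (if b = b' then LS p c N s u else 0) + p * Phi p b c u N s i"
        unfolding Phi_def LS_def Suc 0 e1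
        by (cases "b = b'") (simp_all add: sum.distrib sum_distrib_left)
      also have "\<dots> = (1-p)^(Suc (Suc (length u))) * Kr p (b#u@[c]) (b'#s) i"
      proof -
        have ih: "Phi p b c u N s (Suc 0) = (1-p)^(Suc (Suc (length u))) * Kr p (b#u@[c]) s (Suc 0)"
          using Cons.IH[of "Suc 0"] len by simp
        have cl: "LS p c N s u = (1-p)^(Suc (length u)) * (if take (Suc (length u)) s = u@[c] then 1 else 0)"
          by (rule claim[OF assms len])
        have kr: "Kr p (b#u@[c]) (b'#s) (Suc 0) = (if b' = b \<and> take (Suc (length u)) s = u@[c] then 1 else 0)
            + p * Kr p (b#u@[c]) s (Suc 0)" by simp
        show ?thesis unfolding Suc 0 ih cl kr by (auto simp: algebra_simps)
      qed
      finally show ?thesis .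
    next
      case (Suc i'')
      have e1: "(-(p/(1-p)))^(m - length u) * real (bn v u) * Ew p (b'#s) (Suc (Suc i'')) (b#v@[c]) =
        (1-p) * ((-(p/(1-p)))^(m - length u) * real (bn v u) * Ew p s (Suc i'') (b#v@[c]))
        + p * ((-(p/(1-p)))^(m - length u) * real (bn v u) * Ew p s (Suc (Suc i'')) (b#v@[c]))" for m v
        using assms by (simp add: Ew_Cons_Suc algebra_simps)
      have "Phi p b c u N (b'#s) i = (1-p) * Phi p b c u N s (Suc i'') + p * Phi p b c u N s i"
        unfolding Phi_def \<open>i = Suc i'\<close> Suc e1
        by (simp add: sum.distrib sum_distrib_left)
      also have "\<dots> = (1-p)^(Suc (Suc (length u))) * Kr p (b#u@[c]) (b'#s) i"
      proof -
        have ih1: "Phi p b c u N s (Suc i'') = (1-p)^(Suc (Suc (length u))) * Kr p (b#u@[c]) s (Suc i'')"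
          using Cons.IH[of "Suc i''"] len by simp
        have ih2: "Phi p b c u N s (Suc (Suc i'')) = (1-p)^(Suc (Suc (length u))) * Kr p (b#u@[c]) s (Suc (Suc i''))"
          using Cons.IH[of "Suc (Suc i'')"] len by simp
        have kr: "Kr p (b#u@[c]) (b'#s) (Suc (Suc i'')) = (1-p) * Kr p (b#u@[c]) s (Suc i'') + p * Kr p (b#u@[c]) s (Suc (Suc i''))"
          by simp
        show ?thesis unfolding \<open>i = Suc i'\<close> Suc ih1 ih2 kr by (simp add: algebra_simps)
      qed
      finally show ?thesis .
    qed
  qed
qed

lemma split3: "2 \<le> length y \<Longrightarrow> y = hd y # inner y @ [last y]"
proof (cases y)
  case Nil
  assume "2 \<le> length y" with Nil show ?thesis by simp
next
  case (Cons a t)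
  assume "2 \<le> length y"
  with Cons have "t \<noteq> []" by auto
  thus ?thesis using Cons by (simp add: inner_def)
qed

lemma finite_Yset: "finite (Yset l x)"
  by (rule finite_subset[OF _ finite_Lv[of l]]) (auto simp: Yset_def Lv_def)

lemma Y_conv:
  fixes g :: "bool list \<Rightarrow> real"
  assumes "2 \<le> l"
  shows "(\<Sum>y\<in>Yset l (b#u@[c]). g y * real (binom_str' y (b#u@[c]))) = (\<Sum>v\<in>Lv (l-2). g (b#v@[c]) * real (bn v u))"
proof -
  let ?x = "b#u@[c]"
  have ix: "inner ?x = u" by (simp add: inner_def)
  have bs: "binom_str' y ?x = bn (inner y) u" for y by (simp add: binom_str'_def binom_str_bn ix)
  let ?A = "{v\<in>Lv (l-2). bn v u \<noteq> 0}"
  let ?h = "\<lambda>v. b#v@[c]"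
  have inj: "inj_on ?h ?A" by (rule inj_onI) simp
  have ih: "inner (?h v) = v" for v by (simp add: inner_def)
  have img: "{y\<in>Yset l ?x. bn (inner y) u \<noteq> 0} = ?h ` ?A"
  proof (rule set_eqI, rule iffI)
    fix y assume "y \<in> {y\<in>Yset l ?x. bn (inner y) u \<noteq> 0}"
    hence y: "length y = l" "hd y = b" "last y = c" "bn (inner y) u \<noteq> 0" by (auto simp: Yset_def)
    have "y = ?h (inner y)" using split3[of y] y assms by simp
    moreover have "inner y \<in> ?A" using y by (simp add: Lv_def inner_def)
    ultimately show "y \<in> ?h ` ?A" by blast
  next
    fix y assume "y \<in> ?h ` ?A"
    then obtain v where v: "y = ?h v" "length v = l - 2" "bn v u \<noteq> 0" by (auto simp: Lv_def)
    have "subseq u v" using bn_subseq v(3) .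
    hence "subseq (u@[c]) (v@[c])" by (intro list_emb_append_mono) auto
    hence "subseq ?x y" using v(1) by simp
    thus "y \<in> {y\<in>Yset l ?x. bn (inner y) u \<noteq> 0}" using v assms by (simp add: Yset_def ih)
  qed
  have "(\<Sum>y\<in>Yset l ?x. g y * real (binom_str' y ?x)) = (\<Sum>y\<in>{y\<in>Yset l ?x. bn (inner y) u \<noteq> 0}. g y * real (bn (inner y) u))"
    unfolding bs by (rule sum.mono_neutral_right) (auto simp: finite_Yset)
  also have "\<dots> = (\<Sum>v\<in>?A. g (?h v) * real (bn v u))"
    unfolding img by (subst sum.reindex[OF inj]) (simp add: ih)
  also have "\<dots> = (\<Sum>v\<in>Lv (l-2). g (b#v@[c]) * real (bn v u))"
    by (rule sum.mono_neutral_left) (auto simp: finite_Lv)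
  finally show ?thesis .
qed

lemma K_hat_single: "K_hat p n [w] x i = (1/(1-p)^length x) * (win_ind w i x -
   (\<Sum>l = length x + 1..n. \<Sum>y\<in>Yset l x. (-1)^(length y - length x + 1) * win_ind w i y
       * real (binom_str' y x) * (p/(1-p))^(l - length x)))"
  by (simp add: K_hat_def P_hat_def)

lemma unbiased:
  assumes p: "0 < p" "p < 1" and x2: "2 \<le> length x" and xs: "length x \<le> length s" and i: "1 \<le> i"
  shows "measure_pmf.expectation (trace_pmf p s) (\<lambda>w. K_hat p (length s) [w] x i) = K_true p s x i"
proof -
  define b where "b = hd x"
  define u where "u = inner x"
  define c where "c = last x"
  have x: "x = b#u@[c]" unfolding b_def u_def c_def using split3[OF x2] .
  define n where "n = length s"
  define k where "k = length x"
  define r where "r = p/(1-p)"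
  have k: "k = Suc (Suc (length u))" using x by (simp add: k_def)
  have kn: "k \<le> n" using xs by (simp add: k_def n_def)
  define G where "G m = (\<Sum>v\<in>Lv m. (-r)^(m - length u) * real (bn v u) * Ew p s i (b#v@[c]))" for m
  have int: "\<And>f::bool list \<Rightarrow> real. integrable (measure_pmf (trace_pmf p s)) f"
    by (rule integrable_measure_pmf_finite[OF finite_trace])
  have E1: "measure_pmf.expectation (trace_pmf p s) (\<lambda>w. K_hat p (length s) [w] x i) =
     (1/(1-p)^k) * (Ew p s i x - (\<Sum>l = k+1..n. \<Sum>y\<in>Yset l x. (-1)^(length y - k + 1) * Ew p s i y
        * real (binom_str' y x) * r^(l-k)))"
    unfolding K_hat_single Ew_def k_def n_def r_def
    by (simp add: int integral_diff integral_mult_right_zero integral_mult_left_zero)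
  have E2: "(\<Sum>l = k+1..n. \<Sum>y\<in>Yset l x. (-1)^(length y - k + 1) * Ew p s i y * real (binom_str' y x) * r^(l-k))
     = - (\<Sum>l = k+1..n. G (l - 2))"
    unfolding sum_negf[symmetric]
  proof (rule sum.cong[OF refl])
    fix l assume l: "l \<in> {k+1..n}"
    hence l2: "2 \<le> l" using k by auto
    have "(\<Sum>y\<in>Yset l x. (-1)^(length y - k + 1) * Ew p s i y * real (binom_str' y x) * r^(l-k))
       = (\<Sum>y\<in>Yset l x. ((-1)^(l - k + 1) * r^(l-k) * Ew p s i y) * real (binom_str' y x))"
      by (rule sum.cong[OF refl]) (simp add: Yset_def)
    also have "\<dots> = (\<Sum>v\<in>Lv (l-2). ((-1)^(l - k + 1) * r^(l-k) * Ew p s i (b#v@[c])) * real (bn v u))"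
      unfolding x by (rule Y_conv[OF l2])
    also have "\<dots> = - G (l - 2)"
      unfolding G_def sum_negf[symmetric]
    proof (rule sum.cong[OF refl])
      fix v
      have e: "l - 2 - length u = l - k" using k by simp
      show "(-1)^(l - k + 1) * r^(l-k) * Ew p s i (b#v@[c]) * real (bn v u) =
         - ((-r)^(l - 2 - length u) * real (bn v u) * Ew p s i (b#v@[c]))"
        unfolding e power_minus[of r] power_add by (simp add: mult_ac)
    qed
    finally show "(\<Sum>y\<in>Yset l x. (-1)^(length y - k + 1) * Ew p s i y * real (binom_str' y x) * r^(l-k))
       = - G (l - 2)" .
  qed
  have E3: "(\<Sum>l = k+1..n. G (l - 2)) = (\<Sum>m = Suc (length u)..<n-1. G m)"
  proof -
    have "(\<Sum>l = k+1..n. G (l - 2)) = (\<Sum>l = Suc (length u) + 2..(n-2) + 2. G (l - 2))"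
      using k kn by (intro sum.cong) auto
    also have "\<dots> = (\<Sum>m = Suc (length u)..n-2. G m)"
      by (subst sum.shift_bounds_cl_nat_ivl) simp
    also have "\<dots> = (\<Sum>m = Suc (length u)..<n-1. G m)"
      using k kn by (intro sum.cong) auto
    finally show ?thesis .
  qed
  have Gsmall: "G m = 0" if "m < length u" for m
    unfolding G_def by (rule sum.neutral) (use that in \<open>auto simp: Lv_def bn_short\<close>)
  have Gu: "G (length u) = Ew p s i x"
  proof -
    have "G (length u) = (\<Sum>v\<in>Lv (length u). if v = u then Ew p s i (b#v@[c]) else 0)"
      unfolding G_def by (rule sum.cong[OF refl]) (simp add: Lv_def bn_same_len)
    also have "\<dots> = Ew p s i x" using finite_Lv by (simp add: Lv_def x)
    finally show ?thesis .
  qed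
  have E4: "Phi p b c u (n-1) s i = Ew p s i x + (\<Sum>m = Suc (length u)..<n-1. G m)"
  proof -
    have "Phi p b c u (n-1) s i = (\<Sum>m<n-1. G m)" unfolding Phi_def G_def r_def ..
    also have "\<dots> = (\<Sum>m<Suc (length u). G m) + (\<Sum>m = Suc (length u)..<n-1. G m)"
      unfolding lessThan_atLeast0 using k kn by (intro sum.atLeastLessThan_concat[symmetric]) auto
    also have "(\<Sum>m<Suc (length u). G m) = Ew p s i x"
      using Gsmall Gu by simp
    finally show ?thesis .
  qed
  have E5: "Phi p b c u n s i = Phi p b c u (n-1) s i"
  proof -
    have n1: "n = Suc (n-1)" using k kn by simp
    have "G (n-1) = 0"
      unfolding G_def by (rule sum.neutral) (use n1 in \<open>auto simp: Lv_def n_def intro!: Ew_long\<close>)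
    hence "Phi p b c u (Suc (n-1)) s i = Phi p b c u (n-1) s i"
      unfolding Phi_def G_def r_def by simp
    thus ?thesis using n1 by simp
  qed
  have E6: "Phi p b c u n s i = (1-p)^k * K_true p s x i"
    using claim2[OF p, of s n i b c u] i x2 k unfolding n_def
    by (simp add: Kr_Ks K_true_Ks x)
  have "measure_pmf.expectation (trace_pmf p s) (\<lambda>w. K_hat p (length s) [w] x i) = (1/(1-p)^k) * Phi p b c u n s i"
    unfolding E1 E2 E3 E5 E4 by simp
  also have "\<dots> = K_true p s x i" unfolding E6 using p by simp
  finally show ?thesis .
qed

lemma sum_win_le1: "(\<Sum>y\<in>Yset l x. win_ind w i y) \<le> 1"
proof -
  define w0 where "w0 = take l (drop (i - 1) w)"
  have "(\<Sum>y\<in>Yset l x. win_ind w i y) = (\<Sum>y\<in>Yset l x. if y = w0 then win_ind w i w0 else 0)"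
  proof (rule sum.cong[OF refl])
    fix y assume "y \<in> Yset l x"
    hence ly: "length y = l" by (simp add: Yset_def)
    show "win_ind w i y = (if y = w0 then win_ind w i w0 else 0)"
    proof (cases "y = w0")
      case False
      hence "take (length y) (drop (i - 1) w) \<noteq> y" using ly by (simp add: w0_def)
      thus ?thesis using False by (simp add: win_ind_def)
    qed simp
  qed
  also have "\<dots> = (if w0 \<in> Yset l x then win_ind w i w0 else 0)"
    by (simp add: sum.delta' finite_Yset)
  also have "\<dots> \<le> 1" by (simp add: win_ind_def)
  finally show ?thesis .
qed

lemma binom_term:
  fixes r :: real
  assumes "0 \<le> r" "r \<le> 1" "j \<le> M"
  shows "real (M choose j) * r^(M-j) * (1-r)^j \<le> 1"
proof -
  have "1 = ((1-r) + r)^M" by simp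
  also have "\<dots> = (\<Sum>k\<le>M. real (M choose k) * (1-r)^k * r^(M-k))" by (rule binomial_ring)
  finally have e: "(\<Sum>k\<le>M. real (M choose k) * (1-r)^k * r^(M-k)) = 1" by simp
  have "real (M choose j) * (1-r)^j * r^(M-j) \<le> (\<Sum>k\<le>M. real (M choose k) * (1-r)^k * r^(M-k))"
    by (rule member_le_sum) (use assms in auto)
  thus ?thesis using e by (simp add: algebra_simps)
qed

lemma per_l_bound:
  fixes r :: real
  assumes r: "0 \<le> r" "r < 1" and k: "2 \<le> length x" "length x \<le> l"
  shows "(\<Sum>y\<in>Yset l x. win_ind w i y * real (binom_str' y x) * r^(l - length x)) \<le> 1 / (1-r)^length x"
proof -
  define k where "k = length x"
  define W where "W = 1 / (1-r)^k"
  have W0: "0 \<le> W" using r by (simp add: W_def)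
  have tb: "real (binom_str' y x) * r^(l - k) \<le> W" if y: "y \<in> Yset l x" for y
  proof -
    have ly: "length y = l" using y by (simp add: Yset_def)
    have "binom_str' y x = bn (inner y) (inner x)" by (simp add: binom_str'_def binom_str_bn)
    also have "\<dots> \<le> length (inner y) choose length (inner x)" by (rule bn_le_choose)
    also have "\<dots> = (l - 2) choose (k - 2)" by (simp add: inner_def ly k_def numeral_2_eq_2)
    finally have b1: "real (binom_str' y x) \<le> real ((l - 2) choose (k - 2))" by simp
    have "real ((l-2) choose (k-2)) * r^((l-2)-(k-2)) * (1-r)^(k-2) \<le> 1"
      by (rule binom_term) (use r k in \<open>auto simp: k_def\<close>)
    moreover have "(l-2)-(k-2) = l - k" using k by (simp add: k_def)
    ultimately have b2: "real ((l-2) choose (k-2)) * r^(l-k) \<le> 1 / (1-r)^(k-2)"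
      using r by (simp add: field_simps)
    have b3: "1 / (1-r)^(k-2) \<le> W"
    proof -
      have "(1-r)^k \<le> (1-r)^(k-2)" using r by (intro power_decreasing) auto
      moreover have "0 < (1-r)^k" using r by simp
      ultimately show ?thesis unfolding W_def by (intro divide_left_mono) (auto simp: mult_pos_pos)
    qed
    have "real (binom_str' y x) * r^(l - k) \<le> real ((l - 2) choose (k - 2)) * r^(l-k)"
      using b1 r by (intro mult_right_mono) auto
    thus ?thesis using b2 b3 by linarith
  qed
  have "(\<Sum>y\<in>Yset l x. win_ind w i y * real (binom_str' y x) * r^(l - k)) \<le> (\<Sum>y\<in>Yset l x. win_ind w i y * W)"
  proof (rule sum_mono)
    fix y assume y: "y \<in> Yset l x"
    have "0 \<le> win_ind w i y" by (simp add: win_ind_def)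
    thus "win_ind w i y * real (binom_str' y x) * r^(l - k) \<le> win_ind w i y * W"
      using tb[OF y] by (simp add: mult.assoc mult_left_mono)
  qed
  also have "\<dots> = (\<Sum>y\<in>Yset l x. win_ind w i y) * W" by (simp add: sum_distrib_right)
  also have "\<dots> \<le> 1 * W" using sum_win_le1 W0 by (intro mult_right_mono) auto
  finally show ?thesis by (simp add: W_def k_def)
qed

lemma D_bound:
  fixes r :: real
  assumes r: "0 \<le> r" "r < 1" and k: "2 \<le> length x"
  shows "\<bar>\<Sum>l = length x + 1..n. \<Sum>y\<in>Yset l x. (-1)^(length y - length x + 1) * win_ind w i y
       * real (binom_str' y x) * r^(l - length x)\<bar> \<le> real n * (1 / (1-r)^length x)"
proof -
  let ?W = "1 / (1-r)^length x"
  have "\<bar>\<Sum>l = length x + 1..n. \<Sum>y\<in>Yset l x. (-1)^(length y - length x + 1) * win_ind w i y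
       * real (binom_str' y x) * r^(l - length x)\<bar>
     \<le> (\<Sum>l = length x + 1..n. \<bar>\<Sum>y\<in>Yset l x. (-1)^(length y - length x + 1) * win_ind w i y
       * real (binom_str' y x) * r^(l - length x)\<bar>)" by (rule sum_abs)
  also have "\<dots> \<le> (\<Sum>l = length x + 1..n. ?W)"
  proof (rule sum_mono)
    fix l assume l: "l \<in> {length x + 1..n}"
    have "\<bar>\<Sum>y\<in>Yset l x. (-1)^(length y - length x + 1) * win_ind w i y
       * real (binom_str' y x) * r^(l - length x)\<bar> \<le> (\<Sum>y\<in>Yset l x. \<bar>(-1)^(length y - length x + 1) * win_ind w i y
       * real (binom_str' y x) * r^(l - length x)\<bar>)" by (rule sum_abs)
    also have "\<dots> = (\<Sum>y\<in>Yset l x. win_ind w i y * real (binom_str' y x) * r^(l - length x))"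
      using r by (intro sum.cong refl) (simp add: abs_mult win_ind_def)
    also have "\<dots> \<le> ?W" using per_l_bound[OF r k, of l w i] l by simp
    finally show "\<bar>\<Sum>y\<in>Yset l x. (-1)^(length y - length x + 1) * win_ind w i y
       * real (binom_str' y x) * r^(l - length x)\<bar> \<le> ?W" .
  qed
  also have "\<dots> = real (n - length x) * ?W" by simp
  also have "\<dots> \<le> real n * ?W" using r by (intro mult_right_mono) auto
  finally show ?thesis .
qed

lemma Z_bounds:
  assumes p: "0 < p" "p < 1/2" and k: "2 \<le> length x"
  defines "r \<equiv> p/(1-p)"
  shows "K_hat p n [w] x i \<in> {- (real n * (1/(1-r)^length x)) / (1-p)^length x ..
                              (1 + real n * (1/(1-r)^length x)) / (1-p)^length x}"
proof -
  have r: "0 \<le> r" "r < 1" using p by (auto simp: r_def field_simps)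
  define D where "D = (\<Sum>l = length x + 1..n. \<Sum>y\<in>Yset l x. (-1)^(length y - length x + 1) * win_ind w i y
       * real (binom_str' y x) * (p/(1-p))^(l - length x))"
  have Db: "\<bar>D\<bar> \<le> real n * (1/(1-r)^length x)" using D_bound[OF r k, where n=n and w=w and i=i] by (simp add: D_def r_def)
  have Kh: "K_hat p n [w] x i = (win_ind w i x - D) / (1-p)^length x"
    by (simp add: K_hat_single D_def)
  have w01: "0 \<le> win_ind w i x" "win_ind w i x \<le> 1" by (auto simp: win_ind_def)
  have pp: "0 < (1-p)^length x" using p by simp
  have lo: "- (real n * (1/(1-r)^length x)) \<le> win_ind w i x - D" using Db w01 by (simp add: abs_le_iff)
  have hi: "win_ind w i x - D \<le> 1 + real n * (1/(1-r)^length x)" using Db w01 by (simp add: abs_le_iff)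
  show ?thesis unfolding Kh using divide_right_mono[OF lo, of "(1-p)^length x"] divide_right_mono[OF hi, of "(1-p)^length x"] pp
    by simp
qed

lemma pow_conv:
  assumes "0 < n" "0 < z" "real k = c * log 2 n"
  shows "n powr (- c * log 2 z) = 1 / z ^ k"
proof -
  have "n powr (- c * log 2 z) = exp (- c * log 2 z * ln n)" using assms by (simp add: powr_def)
  also have "- c * log 2 z * ln n = - ((c * log 2 n) * ln z)" using assms by (simp add: log_def field_simps)
  also have "c * log 2 n = real k" using assms(3) by simp
  also have "exp (- (real k * ln z)) = inverse (exp (ln z) ^ k)"
    by (simp add: exp_minus exp_of_nat_mult)
  also have "\<dots> = 1 / z ^ k" using assms by (simp add: divide_inverse)
  finally show ?thesis .
qed

lemma alpha_simp:
  assumes "0 < p" "p < 1/2"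
  shows "alpha_c c p = 1 - c * log 2 (1 - p/(1-p))"
proof -
  define r where "r = p/(1-p)"
  have r: "0 < r" "r < 1" using assms by (auto simp: r_def field_simps)
  have l1: "log 2 ((1-p)/p) = - log 2 r" using assms by (simp add: r_def log_divide)
  have l2: "1 - (1 - r) = r" by simp
  have "alpha_c c p = 1 + c * (- log 2 r) + (c * (- (1 - r) * log 2 (1 - r) - r * log 2 r) + c * log 2 r) / (1 - r)"
    unfolding alpha_c_def H2_def l1 r_def[symmetric] l2 by simp
  also have "\<dots> = 1 - c * log 2 (1 - r)" using r by (simp add: field_simps)
  finally show ?thesis by (simp add: r_def)
qed

lemma rep_Pi: "replicate_pmf T q = map_pmf (\<lambda>f. map f [0..<T]) (Pi_pmf {..<T} d (\<lambda>_. q))"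
proof (induction T)
  case 0
  then show ?case by simp
next
  case (Suc T)
  have m: "map (f(T := y)) [0..<T] = map f [0..<T]" for f :: "nat \<Rightarrow> 'a" and y by simp
  have "replicate_pmf (Suc T) q = replicate_pmf (T + 1) q" by simp
  also have "\<dots> = do {xs \<leftarrow> replicate_pmf T q; y \<leftarrow> q; return_pmf (xs @ [y])}"
    unfolding replicate_pmf_distrib replicate_pmf_1
    by (simp add: map_pmf_def bind_assoc_pmf bind_return_pmf)
  also have "\<dots> = do {f \<leftarrow> Pi_pmf {..<T} d (\<lambda>_. q); y \<leftarrow> q; return_pmf (map f [0..<T] @ [y])}"
    unfolding Suc by (simp add: bind_map_pmf)
  also have "\<dots> = do {y \<leftarrow> q; f \<leftarrow> Pi_pmf {..<T} d (\<lambda>_. q); return_pmf (map f [0..<T] @ [y])}"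
    by (rule bind_commute_pmf)
  also have "\<dots> = map_pmf (\<lambda>f. map f [0..<Suc T]) (Pi_pmf (insert T {..<T}) d (\<lambda>_. q))"
    by (subst Pi_pmf_insert') (simp_all add: map_bind_pmf m)
  also have "insert T {..<T} = {..<Suc T}" by auto
  finally show ?case .
qed

lemma hoeffding_rep:
  fixes q :: "'a pmf" and Z :: "'a \<Rightarrow> real"
  assumes T: "T \<ge> 1" and ab: "a < b" and Zab: "\<And>w. Z w \<in> {a..b}" and \<epsilon>: "\<epsilon> \<ge> 0"
  shows "measure_pmf.prob (replicate_pmf T q)
      {ts. \<bar>(\<Sum>t<T. Z (ts!t)) / T - measure_pmf.expectation q Z\<bar> \<ge> \<epsilon>}
      \<le> 2 * exp (-2 * T * \<epsilon>\<^sup>2 / (b - a)\<^sup>2)"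
proof -
  define Q where "Q = Pi_pmf {..<T} undefined (\<lambda>_. q)"
  define \<mu> where "\<mu> = measure_pmf.expectation q Z"
  have comp: "map_pmf (\<lambda>f. f t) Q = q" if "t < T" for t
    unfolding Q_def using that by (subst Pi_pmf_component) auto
  interpret H: Hoeffding_ineq_iid "measure_pmf Q" "{..<T}" "\<lambda>t f. Z (f t)" "\<lambda>f. Z (f 0)" a b \<mu>
  proof unfold_locales
    show "prob_space.indep_vars (measure_pmf Q) (\<lambda>_. borel) (\<lambda>t f. Z (f t)) {..<T}"
      unfolding Q_def
      by (intro prob_space.indep_vars_compose2[OF _ indep_vars_Pi_pmf])
         (auto simp: measure_pmf.prob_space_axioms)
  next
    fix t assume t: "t \<in> {..<T}"
    have "distr (measure_pmf Q) borel (\<lambda>f. Z (f t)) = distr (measure_pmf (map_pmf (\<lambda>f. f t) Q)) borel Z"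
      unfolding map_pmf_rep_eq by (subst distr_distr) (auto simp: o_def)
    also have "\<dots> = distr (measure_pmf (map_pmf (\<lambda>f. f 0) Q)) borel Z"
      using t T by (simp add: comp)
    also have "\<dots> = distr (measure_pmf Q) borel (\<lambda>f. Z (f 0))"
      unfolding map_pmf_rep_eq by (subst distr_distr) (auto simp: o_def)
    finally show "distr (measure_pmf Q) borel (\<lambda>f. Z (f t)) = distr (measure_pmf Q) borel (\<lambda>f. Z (f 0))" .
  next
    show "AE x in measure_pmf Q. Z (x 0) \<in> {a..b}" using Zab by simp
  next
    have "measure_pmf.expectation Q (\<lambda>f. Z (f 0)) = measure_pmf.expectation (map_pmf (\<lambda>f. f 0) Q) Z"
      by simp
    also have "\<dots> = \<mu>" using T by (simp add: comp \<mu>_def)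
    finally show "\<mu> \<equiv> measure_pmf.expectation Q (\<lambda>f. Z (f 0))" by simp
  qed auto
  have "measure_pmf.prob (replicate_pmf T q) {ts. \<bar>(\<Sum>t<T. Z (ts!t)) / T - \<mu>\<bar> \<ge> \<epsilon>}
      = measure_pmf.prob Q {f \<in> space (measure_pmf Q). \<bar>(\<Sum>t\<in>{..<T}. Z (f t)) / real (card {..<T}) - \<mu>\<bar> \<ge> \<epsilon>}"
    unfolding rep_Pi[of T q undefined] Q_def[symmetric] by simp
  also have "\<dots> \<le> 2 * exp (-2 * real (card {..<T}) * \<epsilon>\<^sup>2 / (b - a)\<^sup>2)"
    by (rule H.Hoeffding_ineq_abs_ge'[OF \<epsilon> ab]) (use T in \<open>auto simp: lessThan_empty_iff\<close>)
  finally show ?thesis by (simp add: \<mu>_def)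
qed

lemma K_hat_avg:
  assumes len: "length ts = T" and T: "T \<ge> 1"
  shows "K_hat p n ts x i = (\<Sum>t<T. K_hat p n [ts!t] x i) / T"
proof -
  define f where "f t y = win_ind (ts!t) i y" for t y
  define g where "g t l y = (-1)^(length y - length x + 1) * f t y * real (binom_str' y x) * (p/(1-p))^(l - length x)" for t l y
  define L where "L = {length x + 1..n}"
  define C where "C = 1/(1-p)^length x"
  have P: "P_hat ts y i = (\<Sum>t<T. f t y) / T" for y
    by (simp add: P_hat_def len f_def)
  have tw: "(-1)^(length y - length x + 1) * ((\<Sum>t<T. f t y) / T) * real (binom_str' y x) * (p/(1-p))^(l - length x)
      = (\<Sum>t<T. g t l y) / T" for l y
  proof -
    have "(\<Sum>t<T. g t l y) = (-1)^(length y - length x + 1) * (\<Sum>t<T. f t y) * real (binom_str' y x) * (p/(1-p))^(l - length x)"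
      unfolding g_def by (simp add: sum_distrib_left sum_distrib_right)
    thus ?thesis by (simp add: times_divide_eq_left times_divide_eq_right)
  qed
  have step1: "K_hat p n ts x i = C * ((\<Sum>t<T. f t x)/T - (\<Sum>l\<in>L. \<Sum>y\<in>Yset l x. (\<Sum>t<T. g t l y)/T))"
    unfolding K_hat_def P tw C_def L_def ..
  have step2: "(\<Sum>l\<in>L. \<Sum>y\<in>Yset l x. (\<Sum>t<T. g t l y)/T) = (\<Sum>t<T. \<Sum>l\<in>L. \<Sum>y\<in>Yset l x. g t l y)/T"
  proof -
    have "(\<Sum>t<T. \<Sum>l\<in>L. \<Sum>y\<in>Yset l x. g t l y / T) = (\<Sum>l\<in>L. \<Sum>t<T. \<Sum>y\<in>Yset l x. g t l y / T)"
      by (rule sum.swap)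
    also have "\<dots> = (\<Sum>l\<in>L. \<Sum>y\<in>Yset l x. \<Sum>t<T. g t l y / T)"
      by (rule sum.cong[OF refl]) (rule sum.swap)
    finally show ?thesis unfolding sum_divide_distrib by simp
  qed
  have step3: "(\<Sum>t<T. K_hat p n [ts!t] x i) = (\<Sum>t<T. C * (f t x - (\<Sum>l\<in>L. \<Sum>y\<in>Yset l x. g t l y)))"
    by (simp add: K_hat_single C_def L_def f_def g_def)
  have step4: "(\<Sum>t<T. C * (f t x - (\<Sum>l\<in>L. \<Sum>y\<in>Yset l x. g t l y)))
      = C * ((\<Sum>t<T. f t x) - (\<Sum>t<T. \<Sum>l\<in>L. \<Sum>y\<in>Yset l x. g t l y))"
    by (simp only: sum_distrib_left[symmetric] sum_subtractf)
  show ?thesis unfolding step1 step2 step3 step4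
    by (simp only: diff_divide_distrib[symmetric] times_divide_eq_right)
qed

theorem lemma3:
  fixes p c \<epsilon> :: real and s x :: "bool list" and i T :: nat
  assumes "0 < p" "p < 1/2" "0 < c"
    and "real (length x) = c * log 2 (real (length s))" "length x \<ge> 2"
    and "1 \<le> i" "i \<le> length s - length x + 1" "length x \<le> length s"
    and "T \<ge> 1" and "\<epsilon> > 0"
  shows "measure_pmf.prob (traces_pmf p s T)
           {ts. \<bar>K_hat p (length s) ts x i - K_true p s x i\<bar> \<ge> \<epsilon>}
         \<le> 2 * exp (- (2 * real T * \<epsilon>^2) /
              (real (length s) *
               ((real (length s)) powr (- c * log 2 (1 - p))
                * (1 + 2 * (real (length s)) powr (alpha_c c p)))^2))"
proof -
  note p = assms(1,2)
  define n where "n = length s"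
  define k where "k = length x"
  define r where "r = p/(1-p)"
  define W where "W = 1/(1-r)^k"
  define Z where "Z w = K_hat p n [w] x i" for w
  define a where "a = - (real n * W) / (1-p)^k"
  define b where "b = (1 + real n * W) / (1-p)^k"
  have p1: "0 < p" "p < 1" using p by auto
  have r: "0 < r" "r < 1" using p by (auto simp: r_def field_simps)
  have W0: "0 < W" using r by (simp add: W_def)
  have n1: "1 \<le> n" using assms(5,8) by (simp add: n_def)
  have pk: "0 < (1-p)^k" using p by simp
  have ba: "b - a = (1 + 2 * (real n * W)) / (1-p)^k"
  proof -
    have "b - a = ((1 + real n * W) - (-(real n * W))) / (1-p)^k"
      unfolding a_def b_def by (rule diff_divide_distrib[symmetric])
    also have "(1 + real n * W) - (-(real n * W)) = 1 + 2 * (real n * W)" by simp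
    finally show ?thesis .
  qed
  have nW: "0 \<le> real n * W" using W0 by simp
  have "0 < (1 + 2 * (real n * W)) / (1-p)^k" using nW pk by (intro divide_pos_pos) linarith+
  hence ab: "a < b" using ba by linarith
  have Zab: "Z w \<in> {a..b}" for w
    using Z_bounds[OF p assms(5), of n w i] unfolding Z_def a_def b_def W_def k_def r_def .
  have EZ: "measure_pmf.expectation (trace_pmf p s) Z = K_true p s x i"
    unfolding Z_def n_def by (rule unbiased[OF p1 assms(5,8,6)])
  have H: "measure_pmf.prob (replicate_pmf T (trace_pmf p s))
      {ts. \<bar>(\<Sum>t<T. Z (ts!t)) / T - measure_pmf.expectation (trace_pmf p s) Z\<bar> \<ge> \<epsilon>}
      \<le> 2 * exp (-2 * real T * \<epsilon>\<^sup>2 / (b - a)\<^sup>2)"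
    by (rule hoeffding_rep[OF assms(9) ab Zab]) (use assms(10) in auto)
  have seteq: "measure_pmf.prob (traces_pmf p s T) {ts. \<bar>K_hat p (length s) ts x i - K_true p s x i\<bar> \<ge> \<epsilon>}
     = measure_pmf.prob (replicate_pmf T (trace_pmf p s))
      {ts. \<bar>(\<Sum>t<T. Z (ts!t)) / T - measure_pmf.expectation (trace_pmf p s) Z\<bar> \<ge> \<epsilon>}"
  proof -
    let ?M = "replicate_pmf T (trace_pmf p s)"
    have eqv: "K_hat p (length s) ts x i = (\<Sum>t<T. Z (ts!t))/T" if "ts \<in> set_pmf ?M" for ts
    proof -
      have "length ts = T" using that by (simp add: set_replicate_pmf)
      thus ?thesis unfolding Z_def n_def by (rule K_hat_avg[OF _ assms(9)])
    qed
    let ?A = "{ts. \<bar>K_hat p (length s) ts x i - K_true p s x i\<bar> \<ge> \<epsilon>}"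
    let ?B = "{ts. \<bar>(\<Sum>t<T. Z (ts!t)) / T - measure_pmf.expectation (trace_pmf p s) Z\<bar> \<ge> \<epsilon>}"
    have AB: "?A \<inter> set_pmf ?M = ?B \<inter> set_pmf ?M"
    proof (rule set_eqI)
      fix ts
      show "ts \<in> ?A \<inter> set_pmf ?M \<longleftrightarrow> ts \<in> ?B \<inter> set_pmf ?M"
      proof (cases "ts \<in> set_pmf ?M")
        case True
        show ?thesis using True by (simp only: Int_iff mem_Collect_eq eqv[OF True] EZ)
      qed simp
    qed
    have "measure_pmf.prob ?M ?A = measure_pmf.prob ?M (?A \<inter> set_pmf ?M)"
      by (rule measure_Int_set_pmf[symmetric])
    also have "\<dots> = measure_pmf.prob ?M (?B \<inter> set_pmf ?M)" unfolding AB ..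
    also have "\<dots> = measure_pmf.prob ?M ?B" by (rule measure_Int_set_pmf)
    finally show ?thesis unfolding traces_pmf_def .
  qed
  have pw1: "real n powr (- c * log 2 (1 - p)) = 1 / (1-p)^k"
    by (rule pow_conv) (use n1 p assms(4) in \<open>auto simp: n_def k_def\<close>)
  have pw2: "real n powr (alpha_c c p) = real n * W"
  proof -
    have "real n powr (alpha_c c p) = real n powr (1 + (- c * log 2 (1 - r)))"
      using alpha_simp[OF p, of c] by (simp add: r_def)
    also have "\<dots> = real n powr 1 * real n powr (- c * log 2 (1 - r))"
      by (rule powr_add)
    also have "real n powr 1 = real n" by simp
    also have "real n powr (- c * log 2 (1 - r)) = W"
      unfolding W_def by (rule pow_conv) (use n1 r assms(4) in \<open>auto simp: n_def k_def\<close>)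
    finally show ?thesis .
  qed
  have D: "real n * (real n powr (- c * log 2 (1 - p)) * (1 + 2 * real n powr (alpha_c c p)))^2 = real n * (b - a)^2"
  proof -
    have "1/(1-p)^k * (1 + 2*(real n * W)) = (1 + 2*(real n * W))/(1-p)^k" by simp
    thus ?thesis unfolding pw1 pw2 ba by (simp only:)
  qed
  have Dpos: "0 < (b - a)^2" using ab by simp
  have "- (2 * real T * \<epsilon>^2) / (real n * (b - a)^2) \<ge> -2 * real T * \<epsilon>\<^sup>2 / (b - a)\<^sup>2"
  proof -
    have "(2 * real T * \<epsilon>^2) / (real n * (b - a)^2) \<le> (2 * real T * \<epsilon>^2) / (b - a)^2"
    proof (rule divide_left_mono)
      show "(b - a)^2 \<le> real n * (b - a)^2" using mult_right_mono[of 1 "real n" "(b-a)^2"] n1 Dpos by simp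
      show "0 \<le> 2 * real T * \<epsilon>^2" by simp
      show "0 < real n * (b - a)^2 * (b - a)^2" using n1 Dpos by simp
    qed
    thus ?thesis by simp
  qed
  hence E: "2 * exp (-2 * real T * \<epsilon>\<^sup>2 / (b - a)\<^sup>2) \<le> 2 * exp (- (2 * real T * \<epsilon>^2) / (real n * (b - a)^2))"
    by simp
  note seteq
  also note H
  also note E
  also have "2 * exp (- (2 * real T * \<epsilon>^2) / (real n * (b - a)^2)) = 2 * exp (- (2 * real T * \<epsilon>^2) /
              (real (length s) *
               ((real (length s)) powr (- c * log 2 (1 - p))
                * (1 + 2 * (real (length s)) powr (alpha_c c p)))^2))"
    using D by (simp only: n_def)
  finally show ?thesis .
qed

end
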